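(* Let $I\in[0,1)$, let $Z\ge 0$ and $L\ge 1$ be integers, and define $$P_s^{(TR)}(L)=1-\sum_{k=0}^{Z+1}\binom{k+Z}{k}I^k(1-I)^{Z+1}\Big[1-Q(L,Z+1-k,0)\Big],$$ $$P_s^{(TU)}=1-\sum_{k=0}^{Z+1}\binom{k+Z}{k}I^k(1-I)^{Z+1}\Big[1-P(Z+1-k)\Big].$$ Then: (i) if $0<I<1$, $P_s^{(TR)}(L)$ is strictly increasing in $L$; (ii) for every $L\ge1$, $P_s^{(TR)}(L)\le P_s^{(TU)}$, and the inequality is strict when $0<I<1$; (iii) $P_s^{(TR)}(L)<1$ for every $L\ge1$ whenever $0\le I<1$ (in particular also when $0.5\le I<1$, where $P_s^{(TU)}=1$).
   Context: Fix $I\in[0,1)$ (the probability that the next mined block is produced by the attacker). Let $\delta_1,\delta_2,\dots$ be i.i.d. random vectors in $\mathbb{Z}^2$ with $\delta_t=[-1,0]^T$ with probability $I$ and $\delta_t=[1,1]^T$ with probability $1-I$; for a starting point $[m,n]^T$ let $s_T=[m,n]^T+\sum_{t=1}^T\delta_t$. With $\mathcal{L}_1=\{[m',n']^T: m'=-1\}$ and $\mathcal{L}_2=\{[m',n']^T: n'=l\}$, let $$Q(l,m,n)=\sum_{T=0}^{\infty}\Pr\big(s_T\in\mathcal{L}_1,\ s_{T'}\notin\mathcal{L}_1\cup\mathcal{L}_2\ \forall\, T'<T\big)$$ be the probability that the walk hits $\mathcal{L}_1$ before $\mathcal{L}_2$. Let $P(m)=\left(\frac{I}{1-I}\right)^{m+1}$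 if $0\le I<0.5$ and $P(m)=1$ if $0.5\le I\le1$. $P_s^{(TR)}(L)$ is the success probability of a time-restricted double-spending attack (confirmation depth $Z$, attacker gives up once the honest branch has grown $L$ blocks past confirmation), and $P_s^{(TU)}$ that of the time-unrestricted attack. *)

theory Defs
  imports "HOL-Analysis.Analysis"
begin

text \<open>A realisation of the first T increments is a list ds of booleans:
  True means delta_t = [-1,0] (attacker block, prob. I),
  False means delta_t = [1,1] (honest block, prob. 1-I).\<close>

definition step_prob :: "real \<Rightarrow> bool list \<Rightarrow> real" where
  "step_prob I ds = I ^ length (filter id ds) * (1 - I) ^ length (filter Not ds)"

definition walk_pos :: "int \<Rightarrow> int \<Rightarrow> bool list \<Rightarrow> nat \<Rightarrow> int \<times> int" where
  "walk_pos m n ds t =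
     (m + (\<Sum>i<t. if ds ! i then -1 else 1), n + (\<Sum>i<t. if ds ! i then 0 else 1))"

definition hit_first :: "int \<Rightarrow> int \<Rightarrow> int \<Rightarrow> bool list \<Rightarrow> bool" where
  "hit_first l m n ds \<longleftrightarrow>
     fst (walk_pos m n ds (length ds)) = -1 \<and>
     (\<forall>T'<length ds. fst (walk_pos m n ds T') \<noteq> -1 \<and> snd (walk_pos m n ds T') \<noteq> l)"

definition Q :: "real \<Rightarrow> int \<Rightarrow> int \<Rightarrow> int \<Rightarrow> real" where
  "Q I l m n = (\<Sum>T. \<Sum>ds\<in>{ds :: bool list. length ds = T \<and> hit_first l m n ds}. step_prob I ds)"

definition Pfun :: "real \<Rightarrow> nat \<Rightarrow> real" where
  "Pfun I m = (if 0 \<le> I \<and> I < 1/2 then (I / (1 - I)) ^ (m + 1) else 1)"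

definition Ps_TR :: "real \<Rightarrow> nat \<Rightarrow> nat \<Rightarrow> real" where
  "Ps_TR I Z L = 1 - (\<Sum>k=0..Z+1. real ((k + Z) choose k) * I ^ k * (1 - I) ^ (Z + 1)
                        * (1 - Q I (int L) (int (Z + 1 - k)) 0))"

definition Ps_TU :: "real \<Rightarrow> nat \<Rightarrow> real" where
  "Ps_TU I Z = 1 - (\<Sum>k=0..Z+1. real ((k + Z) choose k) * I ^ k * (1 - I) ^ (Z + 1)
                        * (1 - Pfun I (Z + 1 - k)))"

end

theory Submission
  imports Defs
begin

definition fT :: "real \<Rightarrow> int \<Rightarrow> int \<Rightarrow> int \<Rightarrow> nat \<Rightarrow> real" where
  "fT I l m n T = (\<Sum>ds\<in>{ds :: bool list. length ds = T \<and> hit_first l m n ds}. step_prob I ds)"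

fun h :: "real \<Rightarrow> int \<Rightarrow> nat \<Rightarrow> int \<Rightarrow> int \<Rightarrow> real" where
  "h I l 0 m n = 0"
| "h I l (Suc N) m n = (if m = -1 then 1 else if n = l then 0
      else I * h I l N (m-1) n + (1-I) * h I l N (m+1) (n+1))"

lemma walk_pos_Cons:
  "walk_pos m n (d#ds) (Suc t) = walk_pos (if d then m-1 else m+1) (if d then n else n+1) ds t"
  by (simp only: walk_pos_def sum.lessThan_Suc_shift nth_Cons_0 nth_Cons_Suc) auto

lemma walk_pos_0: "walk_pos m n ds 0 = (m, n)"
  unfolding walk_pos_def by simp

lemma hit_first_Nil: "hit_first l m n [] \<longleftrightarrow> m = -1"
  unfolding hit_first_def by (simp add: walk_pos_0)

lemma hit_first_Cons:
  "hit_first l m n (d#ds) \<longleftrightarrow> m \<noteq> -1 \<and> n \<noteq> l \<and>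
     hit_first l (if d then m-1 else m+1) (if d then n else n+1) ds"
  unfolding hit_first_def
  by (simp only: length_Cons All_less_Suc2 walk_pos_Cons walk_pos_0) auto

lemma step_prob_Nil: "step_prob I [] = 1" by (simp add: step_prob_def)
lemma step_prob_Cons: "step_prob I (d#ds) = (if d then I else 1 - I) * step_prob I ds"
  by (simp add: step_prob_def)

lemma fT_0: "fT I l m n 0 = (if m = -1 then 1 else 0)"
proof -
  have "{ds :: bool list. length ds = 0 \<and> hit_first l m n ds} = (if m = -1 then {[]} else {})"
    by (auto simp: hit_first_Nil)
  thus ?thesis unfolding fT_def by (simp add: step_prob_Nil)
qed

lemma fin_len: "finite {ds :: bool list. length ds = T \<and> P ds}"
proof -
  have "finite {ds :: bool list. set ds \<subseteq> UNIV \<and> length ds = T}"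
    by (rule finite_lists_length_eq) simp
  thus ?thesis by (rule finite_subset[rotated]) auto
qed

lemma fT_Suc: "fT I l m n (Suc T) = (if m = -1 \<or> n = l then 0
   else I * fT I l (m-1) n T + (1-I) * fT I l (m+1) (n+1) T)"
proof (cases "m = -1 \<or> n = l")
  case True
  hence e: "{ds :: bool list. length ds = Suc T \<and> hit_first l m n ds} = {}"
    by (auto simp: length_Suc_conv hit_first_Cons)
  show ?thesis using True unfolding fT_def e by simp
next
  case False
  define A1 where "A1 = {ds :: bool list. length ds = T \<and> hit_first l (m-1) n ds}"
  define A2 where "A2 = {ds :: bool list. length ds = T \<and> hit_first l (m+1) (n+1) ds}"
  have eq: "{ds :: bool list. length ds = Suc T \<and> hit_first l m n ds} = Cons True ` A1 \<union> Cons False ` A2"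
    using False unfolding A1_def A2_def
    by (auto simp: length_Suc_conv hit_first_Cons split: if_splits)
  have "fT I l m n (Suc T) = sum (step_prob I) (Cons True ` A1) + sum (step_prob I) (Cons False ` A2)"
    unfolding fT_def eq
    by (rule sum.union_disjoint) (auto simp: A1_def A2_def fin_len)
  also have "sum (step_prob I) (Cons True ` A1) = I * fT I l (m-1) n T"
    by (subst sum.reindex) (auto simp: fT_def A1_def step_prob_Cons sum_distrib_left)
  also have "sum (step_prob I) (Cons False ` A2) = (1-I) * fT I l (m+1) (n+1) T"
    by (subst sum.reindex) (auto simp: fT_def A2_def step_prob_Cons sum_distrib_left)
  finally show ?thesis using False by simp
qed

lemma partial: "(\<Sum>T<N. fT I l m n T) = h I l N m n"
proof (induction N arbitrary: m n)
  case 0 thus ?case by simp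
next
  case (Suc N)
  have "(\<Sum>T<Suc N. fT I l m n T) = fT I l m n 0 + (\<Sum>T<N. fT I l m n (Suc T))"
    by (rule sum.lessThan_Suc_shift)
  also have "(\<Sum>T<N. fT I l m n (Suc T)) = (if m = -1 \<or> n = l then 0
      else I * (\<Sum>T<N. fT I l (m-1) n T) + (1-I) * (\<Sum>T<N. fT I l (m+1) (n+1) T))"
    by (simp add: fT_Suc sum.distrib sum_distrib_left)
  finally show ?case by (simp add: Suc.IH fT_0)
qed

lemma h_nonneg: "0 \<le> I \<Longrightarrow> I \<le> 1 \<Longrightarrow> 0 \<le> h I l N m n"
  by (induction N arbitrary: m n) auto

lemma boundA:
  assumes I0: "0 \<le> I" and I1: "I \<le> 1" and r0: "0 \<le> r" and req: "I + (1-I) * r^2 = r"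
  shows "-1 \<le> m \<Longrightarrow> n \<le> l \<Longrightarrow> h I l N m n \<le> r ^ nat (m+1)"
proof (induction N arbitrary: m n)
  case 0 thus ?case using r0 by simp
next
  case (Suc N)
  show ?case
  proof (cases "m = -1")
    case True thus ?thesis by simp
  next
    case mF: False
    show ?thesis
    proof (cases "n = l")
      case True thus ?thesis using mF r0 by simp
    next
      case nF: False
      have "0 \<le> m" using mF Suc.prems by arith
      then obtain k where k: "m = int k" by (rule nonneg_int_cases)
      have a: "h I l N (m-1) n \<le> r ^ k" using Suc.IH[of "m-1" n] Suc.prems k by simp
      have b: "h I l N (m+1) (n+1) \<le> r ^ (k+2)" using Suc.IH[of "m+1" "n+1"] Suc.prems nF k
        by (simp add: nat_add_distrib)
      have "h I l (Suc N) m n = I * h I l N (m-1) n + (1-I) * h I l N (m+1) (n+1)" using mF nF by simp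
      also have "\<dots> \<le> I * r^k + (1-I) * r^(k+2)"
        using a b I0 I1 by (intro add_mono mult_left_mono) auto
      also have "\<dots> = r^k * (I + (1-I)*r^2)" by (simp add: algebra_simps power_add power2_eq_square)
      also have "\<dots> = r ^ nat (m+1)" using req k by (simp add: nat_add_distrib)
      finally show ?thesis .
    qed
  qed
qed

lemma boundB:
  assumes I0: "0 \<le> I" and I1: "I \<le> 1" and r0: "0 \<le> r" and req: "I + (1-I) * r^2 = r"
    and c1: "(1-I) * r \<le> 1"
  shows "0 \<le> m \<Longrightarrow> n \<le> l \<Longrightarrow> h I l N m n \<le> r ^ nat (m+1) * (1 - ((1-I)*r) ^ nat (l-n))"
proof (induction N arbitrary: m n)
  case 0
  have "((1-I)*r) ^ nat (l-n) \<le> 1" using c1 I1 r0 by (intro power_le_one) auto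
  thus ?case using r0 by simp
next
  case (Suc N)
  obtain k where k: "m = int k" using Suc.prems(1) by (rule nonneg_int_cases)
  show ?case
  proof (cases "n = l")
    case True thus ?thesis using Suc.prems by simp
  next
    case nF: False
    define j where "j = nat (l - n - 1)"
    have j: "l - n = int (Suc j)" using Suc.prems(2) nF unfolding j_def by simp
    have a: "h I l N (m-1) n \<le> r ^ k" using boundA[OF I0 I1 r0 req, of "m-1" n l N] Suc.prems k by simp
    have b: "h I l N (m+1) (n+1) \<le> r ^ (k+2) * (1 - ((1-I)*r)^j)"
      using Suc.IH[of "m+1" "n+1"] Suc.prems nF k j
      by (simp add: nat_add_distrib algebra_simps)
    have "h I l (Suc N) m n = I * h I l N (m-1) n + (1-I) * h I l N (m+1) (n+1)" using k nF by simp
    also have "\<dots> \<le> I * r^k + (1-I) * (r ^ (k+2) * (1 - ((1-I)*r)^j))"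
      using a b I0 I1 by (intro add_mono mult_left_mono) auto
    also have "\<dots> = r^k * (I + (1-I)*r^2) - r^(k+1) * ((1-I)*r)^(Suc j)"
      by (simp add: algebra_simps power_add power2_eq_square)
    also have "\<dots> = r ^ nat (m+1) * (1 - ((1-I)*r) ^ nat (l-n))" using req k j
      by (simp add: nat_add_distrib algebra_simps)
    finally show ?thesis .
  qed
qed

lemma h_mono_l:
  assumes I0: "0 \<le> I" and I1: "I \<le> 1" and l12: "l1 \<le> l2"
  shows "n \<le> l1 \<Longrightarrow> h I l1 N m n \<le> h I l2 N m n"
proof (induction N arbitrary: m n)
  case 0 thus ?case by simp
next
  case (Suc N)
  show ?case
  proof (cases "m = -1 \<or> n = l1")
    case True thus ?thesis using h_nonneg[OF I0 I1, of l2 "Suc N" m n] by auto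
  next
    case False
    hence "n \<noteq> l2" "n + 1 \<le> l1" using Suc.prems l12 by auto
    thus ?thesis using False Suc.IH[of n "m-1"] Suc.IH[of "n+1" "m+1"] Suc.prems I0 I1
      by (auto intro!: add_mono mult_left_mono)
  qed
qed

lemma h_attack:
  assumes I0: "0 \<le> I" and I1: "I \<le> 1"
  shows "-1 \<le> m \<Longrightarrow> n < l \<Longrightarrow> nat (m+1) + 1 \<le> N \<Longrightarrow> I ^ nat (m+1) \<le> h I l N m n"
proof (induction N arbitrary: m)
  case 0 thus ?case by simp
next
  case (Suc N)
  show ?case
  proof (cases "m = -1")
    case True thus ?thesis by simp
  next
    case False
    have "0 \<le> m" using False Suc.prems(1) by arith
    then obtain k where k: "m = int k" by (rule nonneg_int_cases)
    have a: "I ^ k \<le> h I l N (m-1) n" using Suc.IH[of "m-1"] Suc.prems k by simp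
    have "I ^ nat (m+1) = I * I ^ k + (1-I) * 0" using k by (simp add: nat_add_distrib)
    also have "\<dots> \<le> I * h I l N (m-1) n + (1-I) * h I l N (m+1) (n+1)"
      using a I0 I1 h_nonneg[OF I0 I1] by (intro add_mono mult_left_mono) auto
    also have "\<dots> = h I l (Suc N) m n" using False Suc.prems by simp
    finally show ?thesis .
  qed
qed

lemma h_strict:
  assumes I0: "0 \<le> I" and I1: "I \<le> 1" and l12: "l1 < l2"
  shows "0 \<le> m \<Longrightarrow> n \<le> l1 \<Longrightarrow> nat m + 2 * nat (l1-n) + 2 \<le> N \<Longrightarrow>
     ((1-I)*I) ^ nat (l1-n) * I ^ nat (m+1) \<le> h I l2 N m n - h I l1 N m n"
proof (induction N arbitrary: m n)
  case 0 thus ?case by simp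
next
  case (Suc N)
  obtain k where k: "m = int k" using Suc.prems(1) by (rule nonneg_int_cases)
  show ?case
  proof (cases "n = l1")
    case True
    have "I ^ nat (m+1) \<le> h I l2 (Suc N) m n"
      using h_attack[OF I0 I1, of m n l2 "Suc N"] Suc.prems True l12 k by (simp add: nat_add_distrib)
    thus ?thesis using True k by simp
  next
    case nF: False
    define j where "j = nat (l1 - n - 1)"
    have j: "l1 - n = int (Suc j)" using Suc.prems(2) nF unfolding j_def by simp
    have a: "0 \<le> h I l2 N (m-1) n - h I l1 N (m-1) n"
      using h_mono_l[OF I0 I1, of l1 l2 n N "m-1"] l12 Suc.prems by simp
    have b: "((1-I)*I) ^ j * I ^ (k+2) \<le> h I l2 N (m+1) (n+1) - h I l1 N (m+1) (n+1)"
      using Suc.IH[of "m+1" "n+1"] Suc.prems nF k j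
      by (simp add: nat_add_distrib algebra_simps)
    have "((1-I)*I) ^ nat (l1-n) * I ^ nat (m+1) = I * 0 + (1-I) * (((1-I)*I) ^ j * I ^ (k+2))"
      using j k by (simp add: nat_add_distrib algebra_simps power_add power2_eq_square)
    also have "\<dots> \<le> I * (h I l2 N (m-1) n - h I l1 N (m-1) n) + (1-I) * (h I l2 N (m+1) (n+1) - h I l1 N (m+1) (n+1))"
      using a b I0 I1 by (intro add_mono mult_left_mono) auto
    also have "\<dots> = h I l2 (Suc N) m n - h I l1 (Suc N) m n"
      using k nF Suc.prems l12 by (simp add: algebra_simps)
    finally show ?thesis .
  qed
qed

lemma Q_lim:
  assumes I0: "0 \<le> I" and I1: "I \<le> 1" and m: "0 \<le> m" and n: "n \<le> l"
  shows "(\<lambda>N. h I l N m n) \<longlonglongrightarrow> Q I l m n"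
proof -
  have nn: "\<And>T. 0 \<le> fT I l m n T"
    unfolding fT_def step_prob_def using I0 I1 by (intro sum_nonneg) auto
  have "summable (fT I l m n)"
  proof (rule summableI_nonneg_bounded[OF nn])
    fix N show "(\<Sum>T<N. fT I l m n T) \<le> 1"
      using boundA[OF I0 I1, of 1 m n l N] m n by (simp add: partial)
  qed
  hence "(\<lambda>N. \<Sum>T<N. fT I l m n T) \<longlonglongrightarrow> suminf (fT I l m n)" by (rule summable_LIMSEQ)
  moreover have "suminf (fT I l m n) = Q I l m n" unfolding Q_def fT_def[abs_def] by (rule refl)
  ultimately show ?thesis by (simp add: partial)
qed

lemma QB:
  assumes I0: "0 \<le> I" and I1: "I \<le> 1" and r0: "0 \<le> r" and req: "I + (1-I) * r^2 = r"
    and c1: "(1-I) * r \<le> 1"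
  shows "Q I (int L) (int j) 0 \<le> r ^ (j+1) * (1 - ((1-I)*r) ^ L)"
proof (rule LIMSEQ_le_const2[OF Q_lim[OF I0 I1]])
  show "\<exists>N. \<forall>n\<ge>N. h I (int L) n (int j) 0 \<le> r ^ (j+1) * (1 - ((1-I)*r) ^ L)"
    using boundB[OF I0 I1 r0 req c1, of "int j" 0 "int L"] by (auto simp: nat_add_distrib)
qed auto

lemma QS:
  assumes I0: "0 < I" and I1: "I < 1" and L: "L1 < L2"
  shows "Q I (int L1) (int j) 0 < Q I (int L2) (int j) 0"
proof -
  let ?c = "((1-I)*I) ^ L1 * I ^ (j+1)"
  have "(\<lambda>N. h I (int L2) N (int j) 0 - h I (int L1) N (int j) 0) \<longlonglongrightarrow> Q I (int L2) (int j) 0 - Q I (int L1) (int j) 0"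
    using I0 I1 L by (intro tendsto_diff Q_lim) auto
  moreover have "\<exists>N. \<forall>n\<ge>N. ?c \<le> h I (int L2) n (int j) 0 - h I (int L1) n (int j) 0"
    using h_strict[of I "int L1" "int L2" "int j" 0] I0 I1 L
    by (intro exI[of _ "j + 2 * L1 + 2"]) (auto simp: nat_add_distrib)
  ultimately have "?c \<le> Q I (int L2) (int j) 0 - Q I (int L1) (int j) 0" by (rule LIMSEQ_le_const)
  moreover have "0 < ?c" using I0 I1 by simp
  ultimately show ?thesis by simp
qed

lemma QF1:
  assumes I0: "0 \<le> I" and I1: "I < 1" and L: "1 \<le> L"
  shows "Q I (int L) (int j) 0 < 1"
proof -
  have "Q I (int L) (int j) 0 \<le> 1 ^ (j+1) * (1 - ((1-I)*1) ^ L)"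
    using I0 I1 by (intro QB) auto
  moreover have "0 < (1-I) ^ L" using I1 by simp
  ultimately show ?thesis by simp
qed

lemma QF2:
  assumes I0: "0 \<le> I" and I1: "I < 1" and L: "1 \<le> L"
  shows "Q I (int L) (int j) 0 \<le> Pfun I j \<and> (0 < I \<longrightarrow> Q I (int L) (int j) 0 < Pfun I j)"
proof (cases "I < 1/2")
  case True
  define r where "r = I / (1 - I)"
  have r0: "0 \<le> r" using I0 I1 by (simp add: r_def)
  have e1: "(1-I) * r^2 = I * r" using I1 by (simp add: r_def power2_eq_square)
  have e2: "1 + r = 1 / (1 - I)" using I1 by (simp add: r_def field_simps)
  have "I + I * r = I * (1 + r)" by (simp add: algebra_simps)
  also have "\<dots> = r" using e2 by (simp add: r_def)
  finally have req: "I + (1-I) * r^2 = r" using e1 by simp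
  have cr: "(1-I) * r = I" using I1 by (simp add: r_def)
  have q: "Q I (int L) (int j) 0 \<le> r ^ (j+1) * (1 - I ^ L)"
    using QB[OF I0 _ r0 req, of L j] I1 cr by simp
  have p: "Pfun I j = r ^ (j+1)" using True I0 by (simp add: Pfun_def r_def)
  have "r ^ (j+1) * (1 - I ^ L) \<le> r ^ (j+1)"
    using r0 I0 by (simp add: mult_left_le)
  moreover have "0 < I \<longrightarrow> r ^ (j+1) * (1 - I ^ L) < r ^ (j+1)"
  proof
    assume "0 < I"
    hence "0 < r ^ (j+1)" "0 < I ^ L" using I1 by (auto simp: r_def)
    hence "0 < r ^ (j+1) * I ^ L" by (rule mult_pos_pos)
    thus "r ^ (j+1) * (1 - I ^ L) < r ^ (j+1)" by (simp add: right_diff_distrib)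
  qed
  ultimately show ?thesis using q p by auto
next
  case False
  hence "Pfun I j = 1" by (simp add: Pfun_def)
  thus ?thesis using QF1[OF I0 I1 L, of j] by simp
qed

theorem corollary1:
  fixes I :: real and Z :: nat
  assumes "0 \<le> I" and "I < 1"
  shows "(0 < I \<longrightarrow> (\<forall>L1 L2. 1 \<le> L1 \<longrightarrow> L1 < L2 \<longrightarrow> Ps_TR I Z L1 < Ps_TR I Z L2))
       \<and> (\<forall>L\<ge>1. Ps_TR I Z L \<le> Ps_TU I Z \<and> (0 < I \<longrightarrow> Ps_TR I Z L < Ps_TU I Z))
       \<and> (\<forall>L\<ge>1. Ps_TR I Z L < 1)"
proof -
  define c where "c k = real ((k + Z) choose k) * I ^ k * (1 - I) ^ (Z + 1)" for k
  have c0: "\<And>k. 0 \<le> c k" using assms by (simp add: c_def)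
  have cpos: "\<And>k. 0 < I \<Longrightarrow> 0 < c k" using assms by (simp add: c_def)
  have TR: "\<And>L. Ps_TR I Z L = 1 - (\<Sum>k=0..Z+1. c k * (1 - Q I (int L) (int (Z + 1 - k)) 0))"
    by (simp add: Ps_TR_def c_def)
  have TU: "Ps_TU I Z = 1 - (\<Sum>k=0..Z+1. c k * (1 - Pfun I (Z + 1 - k)))"
    by (simp add: Ps_TU_def c_def)
  have P1: "Ps_TR I Z L1 < Ps_TR I Z L2" if I0: "0 < I" and "1 \<le> L1" and L: "L1 < L2" for L1 L2
  proof -
    have "(\<Sum>k=0..Z+1. c k * (1 - Q I (int L2) (int (Z + 1 - k)) 0))
        < (\<Sum>k=0..Z+1. c k * (1 - Q I (int L1) (int (Z + 1 - k)) 0))"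
    proof (rule sum_strict_mono)
      fix k assume "k \<in> {0..Z+1}"
      show "c k * (1 - Q I (int L2) (int (Z + 1 - k)) 0) < c k * (1 - Q I (int L1) (int (Z + 1 - k)) 0)"
        using QS[OF I0 assms(2) L, of "Z+1-k"] cpos[OF I0, of k] by (intro mult_strict_left_mono) auto
    qed auto
    thus ?thesis by (simp add: TR)
  qed
  have P2: "Ps_TR I Z L \<le> Ps_TU I Z" if L: "1 \<le> L" for L
  proof -
    have "(\<Sum>k=0..Z+1. c k * (1 - Pfun I (Z + 1 - k)))
        \<le> (\<Sum>k=0..Z+1. c k * (1 - Q I (int L) (int (Z + 1 - k)) 0))"
    proof (rule sum_mono)
      fix k assume "k \<in> {0..Z+1}"
      show "c k * (1 - Pfun I (Z + 1 - k)) \<le> c k * (1 - Q I (int L) (int (Z + 1 - k)) 0)"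
        using QF2[OF assms L, of "Z+1-k"] c0[of k] by (intro mult_left_mono) auto
    qed
    thus ?thesis by (simp add: TR TU)
  qed
  have P3: "Ps_TR I Z L < Ps_TU I Z" if L: "1 \<le> L" and I0: "0 < I" for L
  proof -
    have "(\<Sum>k=0..Z+1. c k * (1 - Pfun I (Z + 1 - k)))
        < (\<Sum>k=0..Z+1. c k * (1 - Q I (int L) (int (Z + 1 - k)) 0))"
    proof (rule sum_strict_mono)
      fix k assume "k \<in> {0..Z+1}"
      show "c k * (1 - Pfun I (Z + 1 - k)) < c k * (1 - Q I (int L) (int (Z + 1 - k)) 0)"
        using QF2[OF assms L, of "Z+1-k"] cpos[OF I0, of k] I0 by (intro mult_strict_left_mono) auto
    qed auto
    thus ?thesis by (simp add: TR TU)
  qed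
  have P4: "Ps_TR I Z L < 1" if L: "1 \<le> L" for L
  proof -
    have "0 < (\<Sum>k=0..Z+1. c k * (1 - Q I (int L) (int (Z + 1 - k)) 0))"
    proof (rule sum_pos2[where i=0])
      show "0 < c 0 * (1 - Q I (int L) (int (Z + 1 - 0)) 0)"
        using QF1[OF assms L, of "Z+1"] assms by (simp add: c_def)
      show "0 \<le> c k * (1 - Q I (int L) (int (Z + 1 - k)) 0)" if "k \<in> {0..Z+1}" for k
      proof -
        have "Q I (int L) (int (Z + 1 - k)) 0 < 1" by (rule QF1[OF assms L])
        thus ?thesis using c0[of k] by simp
      qed
    qed auto
    thus ?thesis by (simp add: TR)
  qed
  show ?thesis using P1 P2 P3 P4 by blast
qed

end
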